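(* In the self-oscillator setting described in the context, for all $\tau\ge0$ and all $l\in\mathbb N_{\ge0}$, $$\tfrac12\int_0^\tau P(t+\tau_l,+1|\tau_l)\,dt=\int_0^\tau\|\vec V_{\mathrm C}\|_{w,1}(t,l)\,dt\le\varepsilon^{\mathrm{quality}}_l(\tau),$$ $$\varepsilon^{\mathrm{quality}}_l(\tau)\le(\|V_{\mathrm C}\|\tau)^{3/4}\Big(\int_0^\tau\|\vec V_{\mathrm C}\|_{w,1}(t,l)\,dt\Big)^{1/4}=\frac{(\|V_{\mathrm C}\|\tau)^{3/4}}{2^{1/4}}\Big(\int_0^\tau P(t+\tau_l,+1|\tau_l)\,dt\Big)^{1/4},$$ where $\|\cdot\|$ is the operator norm.
   Context: Self-oscillator setting: $\mathcal H_{\mathrm S},\mathcal H_{\mathrm C}$ are finite-dimensional; $H_{\mathrm{SC}}$ is a self-adjoint operator on $\mathcal H_{\mathrm S}\otimes\mathcal H_{\mathrm C}$ with smallest eigenvalue $0$; $\{J^j_{\mathrm C}\}_j$ are finitely many operators on $\mathcal H_{\mathrm C}$, $V_{\mathrm C}:=\tfrac12\sum_jJ^{j\dagger}_{\mathrm C}J^j_{\mathrm C}$, with spectral decomposition $V_{\mathrm C}=\sum_jv_j|v_j\rangle\langle v_j|$, $v_j\ge0$. The renewal map is $\mathcal D^{\mathrm{re}}_{\mathrm C}(X):=\sum_j(\mathbb 1\otimes J^j_{\mathrm C})X(\mathbb 1\otimes J^j_{\mathrm C})^\dagger$, assumed to satisfy: there is a fixed density matrix $\rho^0_{\mathrm C}$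 such that $\sum_jJ^j_{\mathrm C}\sigma J^{j\dagger}_{\mathrm C}$ is a nonnegative multiple of $\rho^0_{\mathrm C}$ for every density matrix $\sigma$ on $\mathcal H_{\mathrm C}$. Let $\mathcal L^{\mathrm{no\,re}}(X):=-i[H_{\mathrm{SC}},X]-\{\mathbb 1\otimes V_{\mathrm C},X\}$. Given renewal times $0=\tau_0<\tau_1<\tau_2<\cdots$, define recursively $\rho_{\mathrm{SC}}(\tau_0|\tau_0):=\rho_{\mathrm S}(0)\otimes\rho^0_{\mathrm C}$ (for some density matrix $\rho_{\mathrm S}(0)$), $\rho_{\mathrm{SC}}(\!(t+\tau_l|\tau_l)\!):=e^{t\mathcal L^{\mathrm{no\,re}}}(\rho_{\mathrm{SC}}(\tau_l|\tau_l))$ for $t\ge0$, and for $l\ge1$, $\rho_{\mathrm{SC}}(\tau_l|\tau_l):=\mathcal D^{\mathrm{re}}_{\mathrm C}(\rho_{\mathrm{SC}}(\!(\tau_l|\tau_{l-1})\!))/\mathrm{tr}[\mathcal D^{\mathrm{re}}_{\mathrm C}(\rho_{\mathrm{SC}}(\!(\tau_l|\tau_{l-1})\!))]$. Define $P(t+\tau_l,+1|\tau_l):=\mathrm{tr}[\mathcal D^{\mathrm{re}}_{\mathrm C}(\rho_{\mathrm{SC}}(\!(t+\tau_l|\tau_l)\!))]$. With $p_j(t,l):=\mathrm{tr}[(\mathbb 1_{\mathrm S}\otimes|v_j\rangle\langle v_j|)\rho_{\mathrm{SC}}(\!(t+\tau_l|\tau_l)\!)]$, define the weighted norms $\|\vec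 V_{\mathrm C}\|_{w,q}(t,l):=(\sum_jv_j^q\,p_j(t,l))^{1/q}$ and $\varepsilon^{\mathrm{quality}}_l(\tau):=\int_0^\tau\|\vec V_{\mathrm C}\|_{w,2}(t,l)\,dt$. *)

theory Defs
  imports "HOL-Analysis.Analysis"
begin

text \<open>Operators on a finite-dimensional Hilbert space with orthonormal basis indexed
  by a finite type 'n are complex matrices of type complex^'n^'n.  The tensor product
  space H_S (x) H_C is indexed by the product type 's \<times> 'c.\<close>

type_synonym 'n cmat = "complex^'n^'n"

definition cadj :: "('n::finite) cmat \<Rightarrow> 'n cmat" where
  "cadj M = (\<chi> i j. cnj (M $ j $ i))"

definition csmult :: "complex \<Rightarrow> ('n::finite) cmat \<Rightarrow> 'n cmat" where
  "csmult c M = (\<chi> i j. c * M $ i $ j)"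

definition cinner :: "complex^('n::finite) \<Rightarrow> complex^'n \<Rightarrow> complex" where
  "cinner x y = (\<Sum>i\<in>UNIV. cnj (x $ i) * y $ i)"

definition ketbra :: "complex^('n::finite) \<Rightarrow> complex^'n \<Rightarrow> 'n cmat" where
  "ketbra x y = (\<chi> i j. x $ i * cnj (y $ j))"

definition tensor :: "('s::finite) cmat \<Rightarrow> ('c::finite) cmat \<Rightarrow> ('s \<times> 'c) cmat" where
  "tensor A B = (\<chi> p q. A $ fst p $ fst q * B $ snd p $ snd q)"

definition hermitian :: "('n::finite) cmat \<Rightarrow> bool" where
  "hermitian M \<longleftrightarrow> cadj M = M"

definition psd :: "('n::finite) cmat \<Rightarrow> bool" where
  "psd M \<longleftrightarrow> hermitian M \<and> (\<forall>x. 0 \<le> Re (cinner x (M *v x)))"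

definition density :: "('n::finite) cmat \<Rightarrow> bool" where
  "density M \<longleftrightarrow> psd M \<and> trace M = 1"

definition smallest_eig_zero :: "('n::finite) cmat \<Rightarrow> bool" where
  "smallest_eig_zero H \<longleftrightarrow> psd H \<and> (\<exists>x. x \<noteq> 0 \<and> H *v x = 0)"

definition opnorm :: "('n::finite) cmat \<Rightarrow> real" where
  "opnorm M = onorm (\<lambda>x. M *v x)"

definition superop_exp :: "real \<Rightarrow> (('n::finite) cmat \<Rightarrow> 'n cmat) \<Rightarrow> 'n cmat \<Rightarrow> 'n cmat" where
  "superop_exp t L X = (\<Sum>k. (t ^ k / fact k) *\<^sub>R (L ^^ k) X)"

definition VC :: "('k::finite \<Rightarrow> ('c::finite) cmat) \<Rightarrow> 'c cmat" where
  "VC J = csmult (1/2) (\<Sum>j\<in>UNIV. cadj (J j) ** J j)"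

definition Lnore :: "(('s::finite) \<times> ('c::finite)) cmat \<Rightarrow> ('k::finite \<Rightarrow> 'c cmat) \<Rightarrow> ('s \<times> 'c) cmat \<Rightarrow> ('s \<times> 'c) cmat" where
  "Lnore H J X = csmult (- \<i>) (H ** X - X ** H)
      - (tensor (mat 1) (VC J) ** X + X ** tensor (mat 1) (VC J))"

definition Dre :: "('k::finite \<Rightarrow> ('c::finite) cmat) \<Rightarrow> (('s::finite) \<times> 'c) cmat \<Rightarrow> ('s \<times> 'c) cmat" where
  "Dre J X = (\<Sum>j\<in>UNIV. tensor (mat 1) (J j) ** X ** cadj (tensor (mat 1) (J j)))"

fun rho_ren :: "(('s::finite) \<times> ('c::finite)) cmat \<Rightarrow> ('k::finite \<Rightarrow> 'c cmat) \<Rightarrow> 's cmat \<Rightarrow> 'c cmat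
     \<Rightarrow> (nat \<Rightarrow> real) \<Rightarrow> nat \<Rightarrow> ('s \<times> 'c) cmat" where
  "rho_ren H J rhoS0 rho0 tau 0 = tensor rhoS0 rho0"
| "rho_ren H J rhoS0 rho0 tau (Suc l) =
     (let Y = Dre J (superop_exp (tau (Suc l) - tau l) (Lnore H J) (rho_ren H J rhoS0 rho0 tau l))
      in csmult (1 / trace Y) Y)"

definition rho_ev :: "(('s::finite) \<times> ('c::finite)) cmat \<Rightarrow> ('k::finite \<Rightarrow> 'c cmat) \<Rightarrow> 's cmat \<Rightarrow> 'c cmat
     \<Rightarrow> (nat \<Rightarrow> real) \<Rightarrow> nat \<Rightarrow> real \<Rightarrow> ('s \<times> 'c) cmat" where
  "rho_ev H J rhoS0 rho0 tau l t = superop_exp t (Lnore H J) (rho_ren H J rhoS0 rho0 tau l)"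

text \<open>P(t + tau_l, +1 | tau_l) (a real number; the trace is real here)\<close>
definition Pjump :: "(('s::finite) \<times> ('c::finite)) cmat \<Rightarrow> ('k::finite \<Rightarrow> 'c cmat) \<Rightarrow> 's cmat \<Rightarrow> 'c cmat
     \<Rightarrow> (nat \<Rightarrow> real) \<Rightarrow> nat \<Rightarrow> real \<Rightarrow> real" where
  "Pjump H J rhoS0 rho0 tau l t = Re (trace (Dre J (rho_ev H J rhoS0 rho0 tau l t)))"

definition pj :: "(('s::finite) \<times> ('c::finite)) cmat \<Rightarrow> ('k::finite \<Rightarrow> 'c cmat) \<Rightarrow> 's cmat \<Rightarrow> 'c cmat
     \<Rightarrow> (nat \<Rightarrow> real) \<Rightarrow> ('c \<Rightarrow> complex^'c) \<Rightarrow> 'c \<Rightarrow> nat \<Rightarrow> real \<Rightarrow> real" where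
  "pj H J rhoS0 rho0 tau vv j l t =
     Re (trace (tensor (mat 1) (ketbra (vv j) (vv j)) ** rho_ev H J rhoS0 rho0 tau l t))"

definition wnorm :: "(('s::finite) \<times> ('c::finite)) cmat \<Rightarrow> ('k::finite \<Rightarrow> 'c cmat) \<Rightarrow> 's cmat \<Rightarrow> 'c cmat
     \<Rightarrow> (nat \<Rightarrow> real) \<Rightarrow> ('c \<Rightarrow> real) \<Rightarrow> ('c \<Rightarrow> complex^'c) \<Rightarrow> nat \<Rightarrow> nat \<Rightarrow> real \<Rightarrow> real" where
  "wnorm H J rhoS0 rho0 tau v vv q l t =
     (\<Sum>j\<in>UNIV. v j ^ q * pj H J rhoS0 rho0 tau vv j l t) powr (1 / real q)"

definition eps_quality :: "(('s::finite) \<times> ('c::finite)) cmat \<Rightarrow> ('k::finite \<Rightarrow> 'c cmat) \<Rightarrow> 's cmat \<Rightarrow> 'c cmat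
     \<Rightarrow> (nat \<Rightarrow> real) \<Rightarrow> ('c \<Rightarrow> real) \<Rightarrow> ('c \<Rightarrow> complex^'c) \<Rightarrow> nat \<Rightarrow> real \<Rightarrow> real" where
  "eps_quality H J rhoS0 rho0 tau v vv l T =
     integral {0..T} (\<lambda>t. wnorm H J rhoS0 rho0 tau v vv 2 l t)"

end

theory Submission
  imports Defs
begin

fun mpow :: "('n::finite) cmat \<Rightarrow> nat \<Rightarrow> 'n cmat" where
  "mpow A 0 = mat 1"
| "mpow A (Suc k) = A ** mpow A k"

lemma cadj_cadj[simp]: "cadj (cadj A) = A"
  by (simp add: cadj_def vec_eq_iff)

lemma cadj_mult: "cadj (A ** B) = cadj B ** cadj (A::'n::finite cmat)"
  by (simp add: cadj_def matrix_matrix_mult_def vec_eq_iff mult.commute)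

lemma cadj_add: "cadj (A + B) = cadj A + cadj (B::'n::finite cmat)"
  by (simp add: cadj_def vec_eq_iff)

lemma cadj_diff: "cadj (A - B) = cadj A - cadj (B::'n::finite cmat)"
  by (simp add: cadj_def vec_eq_iff)

lemma cadj_scaleR: "cadj (r *\<^sub>R A) = r *\<^sub>R cadj (A::'n::finite cmat)"
  by (simp add: cadj_def vec_eq_iff)

lemma cadj_csmult: "cadj (csmult c A) = csmult (cnj c) (cadj (A::'n::finite cmat))"
  by (simp add: cadj_def csmult_def vec_eq_iff)

lemma cadj_mat1[simp]: "cadj (mat 1 :: 'n::finite cmat) = mat 1"
  by (simp add: cadj_def mat_def vec_eq_iff)

lemma cadj_zero[simp]: "cadj (0 :: 'n::finite cmat) = 0"
  by (simp add: cadj_def vec_eq_iff)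

lemma cadj_sum: "cadj (sum f S) = sum (\<lambda>x. cadj (f x :: 'n::finite cmat)) S"
  by (simp add: cadj_def vec_eq_iff sum_component)

lemma tensor_mult: "tensor A B ** tensor C D = tensor (A ** C) (B ** (D::'c::finite cmat))"
  for A C :: "'s::finite cmat"
proof -
  have eq: "(tensor A B ** tensor C D) $ p $ q = tensor (A ** C) (B ** D) $ p $ q" for p q
  proof -
    have "(tensor A B ** tensor C D) $ p $ q
       = (\<Sum>r\<in>UNIV \<times> UNIV. A $ fst p $ fst r * B $ snd p $ snd r * (C $ fst r $ fst q * D $ snd r $ snd q))"
      by (simp add: tensor_def matrix_matrix_mult_def UNIV_Times_UNIV)
    also have "\<dots> = (\<Sum>s\<in>UNIV. \<Sum>c\<in>UNIV. (A $ fst p $ s * C $ s $ fst q) * (B $ snd p $ c * D $ c $ snd q))"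
      by (subst sum.cartesian_product) (simp add: split_def algebra_simps)
    also have "\<dots> = tensor (A ** C) (B ** D) $ p $ q"
      by (simp add: tensor_def matrix_matrix_mult_def sum_product)
    finally show ?thesis .
  qed
  show ?thesis by (intro vec_eq_iff[THEN iffD2] allI eq)
qed

lemma cadj_tensor: "cadj (tensor A B) = tensor (cadj A) (cadj (B::'c::finite cmat))"
  for A :: "'s::finite cmat"
  by (simp add: cadj_def tensor_def vec_eq_iff)

lemma tensor_mat1: "tensor (mat 1 :: 's::finite cmat) (mat 1 :: 'c::finite cmat) = mat 1"
  by (simp add: tensor_def mat_def vec_eq_iff prod_eq_iff)

lemma tensor_sum_right: "tensor A (sum f S) = (\<Sum>x\<in>S. tensor A (f x :: 'c::finite cmat))"
  for A :: "'s::finite cmat"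
  by (simp add: tensor_def vec_eq_iff sum_component sum_distrib_left)

lemma tensor_csmult_right: "tensor A (csmult c B) = csmult c (tensor A (B :: 'c::finite cmat))"
  for A :: "'s::finite cmat"
  by (simp add: tensor_def csmult_def vec_eq_iff algebra_simps)

lemma trace_tensor: "trace (tensor A B) = trace A * trace (B :: 'c::finite cmat)"
  for A :: "'s::finite cmat"
proof -
  have "trace (tensor A B) = (\<Sum>p\<in>UNIV\<times>UNIV. A$fst p$fst p * B$snd p$snd p)"
    by (simp add: trace_def tensor_def UNIV_Times_UNIV)
  also have "\<dots> = trace A * trace B"
    by (simp add: trace_def sum_product sum.cartesian_product split_def)
  finally show ?thesis .
qed
lemma mpow_Suc': "mpow A (Suc k) = mpow A k ** A"
  by (induction k) (simp_all add: matrix_mul_assoc)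

lemma cadj_mpow: "cadj (mpow A k) = mpow (cadj A) k"
  by (induction k) (simp_all add: cadj_mult flip: mpow_Suc')

lemma cinner_mv: "cinner x (A *v y) = cinner (cadj A *v x) y"
proof -
  have "cinner x (A *v y) = (\<Sum>i\<in>UNIV. \<Sum>j\<in>UNIV. cnj (x$i) * A$i$j * y$j)"
    by (simp add: cinner_def matrix_vector_mult_def sum_distrib_left mult.assoc)
  also have "\<dots> = (\<Sum>j\<in>UNIV. \<Sum>i\<in>UNIV. cnj (x$i) * A$i$j * y$j)"
    by (rule sum.swap)
  also have "\<dots> = cinner (cadj A *v x) y"
    by (simp add: cinner_def matrix_vector_mult_def cadj_def sum_distrib_left sum_distrib_right mult.commute mult.left_commute)
  finally show ?thesis .
qed

lemma trace_csmult: "trace (csmult c A) = c * trace (A::'n::finite cmat)"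
  by (simp add: trace_def csmult_def sum_distrib_left)

lemma trace_sum: "trace (sum f S) = (\<Sum>x\<in>S. trace (f x :: 'n::finite cmat))"
  by (simp add: trace_def sum_component sum.swap[of _ S])

lemma csmult_mult_left: "csmult c A ** B = csmult c (A ** (B::'n::finite cmat))"
  by (simp add: csmult_def matrix_matrix_mult_def vec_eq_iff sum_distrib_left algebra_simps)

lemma csmult_mult_right: "A ** csmult c B = csmult c (A ** (B::'n::finite cmat))"
  by (simp add: csmult_def matrix_matrix_mult_def vec_eq_iff sum_distrib_left algebra_simps)

lemma csmult_zero[simp]: "csmult 0 A = 0"
  by (simp add: csmult_def vec_eq_iff)

lemma csmult_one[simp]: "csmult 1 A = A"
  by (simp add: csmult_def vec_eq_iff)

lemma matrix_sum_mult_left: "sum f S ** B = (\<Sum>x\<in>S. f x ** (B::'n::finite cmat))"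
  by (simp add: matrix_matrix_mult_def vec_eq_iff sum_component sum_distrib_right sum.swap[of _ S])

lemma matrix_sum_mult_right: "B ** sum f S = (\<Sum>x\<in>S. B ** (f x::'n::finite cmat))"
  by (simp add: matrix_matrix_mult_def vec_eq_iff sum_component sum_distrib_left sum.swap[of _ S])

lemma cinner_add_right: "cinner x (y + z) = cinner x y + cinner x z"
  by (simp add: cinner_def sum.distrib algebra_simps)
lemma cinner_add_left: "cinner (x + y) z = cinner x z + cinner y z"
  by (simp add: cinner_def sum.distrib algebra_simps)
lemma cinner_diff_right: "cinner x (y - z) = cinner x y - cinner x z"
  by (simp add: cinner_def sum_subtractf algebra_simps)
lemma cinner_scale_right: "cinner x (c *s y) = c * cinner x y"
  by (simp add: cinner_def sum_distrib_left algebra_simps)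
lemma cinner_scale_left: "cinner (c *s x) y = cnj c * cinner x y"
  by (simp add: cinner_def sum_distrib_left algebra_simps)
lemma cinner_cnj: "cnj (cinner x y) = cinner y x"
  by (simp add: cinner_def mult.commute)
lemma cinner_axis: "cinner (axis a 1) z = z $ a"
proof -
  have eq: "(\<lambda>i. cnj (axis a 1 $ i) * z $ i) = (\<lambda>i. if i = a then z $ a else 0)"
    by (auto simp: axis_def)
  show ?thesis unfolding cinner_def eq by simp
qed
lemma cinner_self: "cinner x x = of_real (\<Sum>i\<in>UNIV. (cmod (x$i))^2)"
proof -
  have "cnj (x$i) * x$i = of_real ((cmod (x$i))^2)" for i
    by (metis complex_norm_square mult.commute)
  then show ?thesis by (simp add: cinner_def)
qed
lemma mv_axis: "(M *v axis a 1) $ i = M $ i $ a"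
  by (simp add: matrix_vector_mult_def axis_def if_distrib cong: if_cong)
lemma mv_add: "(A + B) *v x = A *v x + B *v (x::complex^'n::finite)"
  by (simp add: matrix_vector_mult_def vec_eq_iff sum.distrib algebra_simps)
lemma mv_add_right: "A *v (x + y) = A *v x + A *v (y::complex^'n::finite)"
  by (simp add: matrix_vector_mult_def vec_eq_iff sum.distrib algebra_simps)
lemma mv_diff: "(A - B) *v x = A *v x - B *v (x::complex^'n::finite)"
  by (simp add: matrix_vector_mult_def vec_eq_iff sum_subtractf algebra_simps)
lemma mv_scale_right: "A *v (c *s x) = c *s (A *v (x::complex^'n::finite))"
  by (simp add: matrix_vector_mult_def vec_eq_iff sum_distrib_left algebra_simps)
lemma mv_csmult: "csmult c A *v x = c *s (A *v (x::complex^'n::finite))"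
  by (simp add: csmult_def matrix_vector_mult_def vec_eq_iff sum_distrib_left algebra_simps)
lemma mv_zero: "(0::'n::finite cmat) *v x = 0"
  by (simp add: matrix_vector_mult_def vec_eq_iff)
lemma mv_sum: "sum f S *v x = (\<Sum>k\<in>S. f k *v (x::complex^'n::finite))"
  by (induction S rule: infinite_finite_induct) (simp_all add: mv_add mv_zero)
lemma cinner_zero_right[simp]: "cinner x 0 = 0"
  by (simp add: cinner_def)
lemma cinner_sum_right: "cinner x (sum f S) = (\<Sum>k\<in>S. cinner x (f k))"
  by (induction S rule: infinite_finite_induct) (simp_all add: cinner_add_right)

lemma ketbra_mv: "ketbra u v *v x = cinner v x *s u"
  by (simp add: ketbra_def matrix_vector_mult_def cinner_def vec_eq_iff sum_distrib_left mult.commute mult.left_commute)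
lemma cadj_ketbra: "cadj (ketbra u v) = ketbra v u"
  by (simp add: ketbra_def cadj_def vec_eq_iff)
lemma ketbra_zero[simp]: "ketbra 0 0 = (0::'n::finite cmat)"
  by (simp add: ketbra_def vec_eq_iff)

lemma psd_iff: "psd M \<longleftrightarrow> cadj M = M \<and> (\<forall>x. 0 \<le> Re (cinner x (M *v x)))"
  by (simp add: psd_def hermitian_def)

lemma psd_ketbra: "psd (ketbra u u)"
proof -
  have "cinner x (ketbra u u *v x) = of_real ((cmod (cinner u x))^2)" for x
  proof -
    have "cinner x (ketbra u u *v x) = cinner u x * cnj (cinner u x)"
      by (simp add: ketbra_mv cinner_scale_right cinner_cnj)
    then show ?thesis by (simp only: complex_norm_square)
  qed
  then show ?thesis by (simp add: psd_iff cadj_ketbra)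
qed

lemma psd_zero: "psd (0::'n::finite cmat)"
  by (simp add: psd_iff mv_zero cinner_def)

lemma psd_add: "psd A \<Longrightarrow> psd B \<Longrightarrow> psd (A + B)"
  by (simp add: psd_iff cadj_add mv_add cinner_add_right)

lemma psd_sum: "finite S \<Longrightarrow> (\<And>k. k \<in> S \<Longrightarrow> psd (f k)) \<Longrightarrow> psd (sum f S)"
  by (induction S rule: finite_induct) (auto intro: psd_add psd_zero)

lemma psd_csmult: "0 \<le> r \<Longrightarrow> psd A \<Longrightarrow> psd (csmult (of_real r) A)"
  by (simp add: psd_iff cadj_csmult mv_csmult cinner_scale_right)

lemma psd_conj: "psd X \<Longrightarrow> psd (E ** X ** cadj E)"
proof -
  assume X: "psd X"
  have "cadj (E ** X ** cadj E) = E ** X ** cadj E"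
    using X by (simp add: psd_iff cadj_mult matrix_mul_assoc)
  moreover have "cinner x ((E ** X ** cadj E) *v x) = cinner (cadj E *v x) (X *v (cadj E *v x))" for x
  proof -
    have "(E ** X ** cadj E) *v x = E *v (X *v (cadj E *v x))" by (simp add: matrix_vector_mul_assoc matrix_mul_assoc)
    then show ?thesis by (simp only: cinner_mv[of x E])
  qed
  ultimately show ?thesis using X by (simp add: psd_iff)
qed

lemma psd_mat1: "psd (mat 1 :: 'n::finite cmat)"
  by (simp add: psd_iff cinner_self sum_nonneg)

lemma psd_diag: "psd M \<Longrightarrow> M $ a $ a = of_real (Re (M $ a $ a)) \<and> 0 \<le> Re (M $ a $ a)"
proof -
  assume M: "psd M"
  have "cnj (M $ a $ a) = M $ a $ a" using M
    by (metis (no_types, lifting) cadj_def psd_iff vec_lambda_beta)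
  then have "Im (cnj (M $ a $ a)) = Im (M $ a $ a)" by simp
  then have "Im (M $ a $ a) = 0" by simp
  moreover have "0 \<le> Re (cinner (axis a 1) (M *v axis a 1))" using M by (simp add: psd_iff)
  ultimately show ?thesis by (simp add: cinner_axis mv_axis complex_eq_iff)
qed

lemma psd_trace: "psd M \<Longrightarrow> trace M = of_real (Re (trace M)) \<and> 0 \<le> Re (trace M)"
proof -
  assume M: "psd M"
  have "trace M = (\<Sum>i\<in>UNIV. of_real (Re (M$i$i)))"
    unfolding trace_def using psd_diag[OF M] by (metis (no_types, lifting))
  then show ?thesis using psd_diag[OF M] by (simp add: sum_nonneg Re_sum)
qed

lemma form_expand:
  "cinner (x + c *s y) (M *v (x + c *s y)) = cinner x (M *v x) + c * cinner x (M *v y)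
     + cnj c * cinner y (M *v x) + cnj c * c * cinner y (M *v y)"
  apply (simp only: mv_add_right mv_scale_right cinner_add_left cinner_add_right cinner_scale_left
      cinner_scale_right)
  apply (simp add: distrib_left)
  done

lemma psd_herm: "psd M \<Longrightarrow> M $ j $ i = cnj (M $ i $ j)"
proof -
  assume "psd M"
  then have "cadj M = M" by (simp add: psd_iff)
  then have "(cadj M) $ j $ i = M $ j $ i" by simp
  then show ?thesis by (simp add: cadj_def)
qed

lemma psd_col0:
  assumes M: "psd M" and d: "M $ a $ a = 0"
  shows "M $ i $ a = 0"
proof (rule ccontr)
  assume c0: "M $ i $ a \<noteq> 0"
  define c where "c = M $ i $ a"
  define r where "r = (\<bar>Re (M$i$i)\<bar> + 1) / (2 * (cmod c)^2)"
  have cpos: "0 < cmod c" using c0 by (simp add: c_def)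
  define lam where "lam = - (of_real r * cnj c)"
  have "0 \<le> Re (cinner (axis i 1 + lam *s axis a 1) (M *v (axis i 1 + lam *s axis a 1)))"
    using M by (simp add: psd_iff)
  also have "cinner (axis i 1 + lam *s axis a 1) (M *v (axis i 1 + lam *s axis a 1))
      = M$i$i + lam * c + cnj lam * cnj c"
    by (simp add: form_expand cinner_axis mv_axis d c_def psd_herm[OF M, of a i])
  also have "lam * c = - of_real (r * (cmod c)^2)"
  proof -
    have "lam * c = - (of_real r * (c * cnj c))" by (simp add: lam_def algebra_simps)
    then show ?thesis by (simp only: complex_norm_square[symmetric] of_real_mult)
  qed
  also have "cnj lam * cnj c = - of_real (r * (cmod c)^2)"
  proof -
    have "cnj lam * cnj c = - (of_real r * (c * cnj c))" by (simp add: lam_def algebra_simps)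
    then show ?thesis by (simp only: complex_norm_square[symmetric] of_real_mult)
  qed
  finally have fin: "0 \<le> Re (M$i$i) - 2 * (r * (cmod c)^2)" by simp
  have q: "r * (cmod c)^2 = (\<bar>Re (M$i$i)\<bar> + 1) / 2"
    using cpos by (simp add: r_def field_simps)
  have "0 \<le> Re (M$i$i) - (\<bar>Re (M$i$i)\<bar> + 1)" using fin unfolding q by simp
  then show False using abs_ge_self[of "Re (M$i$i)"] by linarith
qed

lemma gram_aux:
  fixes I :: "'n::finite set"
  assumes "finite I"
  shows "psd M \<Longrightarrow> (\<forall>i j. i \<notin> I \<longrightarrow> M$i$j = 0) \<Longrightarrow> \<exists>f (m::nat). M = (\<Sum>k<m. ketbra (f k) (f k))"
  using assms
proof (induction I arbitrary: M rule: finite_induct)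
  case empty
  then have "M = 0" by (simp add: vec_eq_iff)
  then show ?case by (intro exI[of _ "\<lambda>_. 0"] exI[of _ 0]) simp
next
  case (insert a I)
  have M: "psd M" and supp: "\<forall>i j. i \<notin> insert a I \<longrightarrow> M$i$j = 0" by fact+
  define d where "d = Re (M$a$a)"
  have d: "M$a$a = of_real d" "0 \<le> d" using psd_diag[OF M] by (auto simp: d_def)
  define s where "s = sqrt d"
  have ss: "s * s = d" using d by (simp add: s_def)
  define w :: "complex^'n" where "w = (\<chi> i. M$i$a / of_real s)"
  define M' where "M' = M - ketbra w w"
  have herm': "cadj M' = M'"
    using M by (simp add: M'_def cadj_diff cadj_ketbra psd_iff)
  have col: "M'$i$a = 0" for i
  proof (cases "d = 0")
    case True
    then show ?thesis using psd_col0[OF M, of a i] d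
      by (simp add: M'_def w_def s_def ketbra_def)
  next
    case False
    then have "s \<noteq> 0" using ss by auto
    then show ?thesis using ss d False
      by (simp add: M'_def w_def ketbra_def field_simps flip: of_real_mult)
  qed
  have row: "M'$a$j = 0" for j
  proof -
    have "(cadj M') $ a $ j = M' $ a $ j" using herm' by simp
    then show ?thesis using col[of j] by (simp add: cadj_def)
  qed
  have form: "0 \<le> Re (cinner x (M' *v x))" for x
  proof (cases "d = 0")
    case True
    then have "w = 0" by (simp add: w_def s_def vec_eq_iff)
    then show ?thesis using M by (simp add: M'_def psd_iff)
  next
    case False
    then have dpos: "d > 0" and "s \<noteq> 0" using ss d by auto
    define \<beta> where "\<beta> = (M *v x) $ a"
    have cw: "cinner w x = \<beta> / of_real s"
      by (simp add: cinner_def w_def \<beta>_def matrix_vector_mult_def psd_herm[OF M, of _ a]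
          sum_divide_distrib)
    have "cinner x (M' *v x) = cinner x (M *v x) - cnj (cinner w x) * cinner w x"
      by (simp add: M'_def mv_diff ketbra_mv cinner_diff_right cinner_scale_right
          flip: cinner_cnj[of w x])
    also have "\<dots> = cinner x (M *v x) - cnj \<beta> * \<beta> / of_real d"
      using ss by (simp add: cw flip: of_real_mult)
    finally have e1: "cinner x (M' *v x) = cinner x (M *v x) - cnj \<beta> * \<beta> / of_real d" .
    define \<alpha> where "\<alpha> = - \<beta> / of_real d"
    have cxe: "cinner x (M *v axis a 1) = cnj \<beta>"
    proof -
      have "cinner (M *v axis a 1) x = (\<Sum>i\<in>UNIV. cnj (M$i$a) * x$i)"
        by (simp add: cinner_def mv_axis)
      also have "\<dots> = (\<Sum>i\<in>UNIV. M$a$i * x$i)"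
        by (simp add: psd_herm[OF M, of a])
      also have "\<dots> = \<beta>" by (simp add: \<beta>_def matrix_vector_mult_def)
      finally have "cinner (M *v axis a 1) x = \<beta>" .
      then show ?thesis by (metis cinner_cnj)
    qed
    have "cinner (x + \<alpha> *s axis a 1) (M *v (x + \<alpha> *s axis a 1))
        = cinner x (M *v x) + \<alpha> * cnj \<beta> + cnj \<alpha> * \<beta> + cnj \<alpha> * \<alpha> * of_real d"
      by (simp add: form_expand cxe cinner_axis mv_axis d \<beta>_def)
    also have "\<dots> = cinner x (M' *v x)"
      using dpos by (simp add: e1 \<alpha>_def field_simps)
    finally show ?thesis using M by (metis psd_iff)
  qed
  have M'psd: "psd M'" using herm' form by (simp add: psd_iff)
  have supp': "\<forall>i j. i \<notin> I \<longrightarrow> M'$i$j = 0"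
  proof (intro allI impI)
    fix i j assume i: "i \<notin> I"
    show "M'$i$j = 0"
    proof (cases "i = a")
      case True then show ?thesis using row by simp
    next
      case False
      then have "M$i$j = 0" "M$i$a = 0" using supp i by auto
      then show ?thesis by (simp add: M'_def w_def ketbra_def)
    qed
  qed
  obtain f and m :: nat where fm: "M' = (\<Sum>k<m. ketbra (f k) (f k))"
    using insert.IH[OF M'psd supp'] by blast
  have "M = M' + ketbra w w" by (simp add: M'_def)
  also have "\<dots> = (\<Sum>k<Suc m. ketbra ((f(m := w)) k) ((f(m := w)) k))"
    by (simp add: fm)
  finally show ?case by blast
qed

lemma gram: "psd (M::'n::finite cmat) \<Longrightarrow> \<exists>f (m::nat). M = (\<Sum>k<m. ketbra (f k) (f k))"
  using gram_aux[of "UNIV :: 'n set" M] by simp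

definition kron :: "complex^('s::finite) \<Rightarrow> complex^('c::finite) \<Rightarrow> complex^('s \<times> 'c)" where
  "kron a b = (\<chi> p. a $ fst p * b $ snd p)"

lemma tensor_ketbra: "tensor (ketbra a a) (ketbra b b) = ketbra (kron a b) (kron a b)"
  by (simp add: tensor_def ketbra_def kron_def vec_eq_iff algebra_simps)

lemma tensor_sum_left: "tensor (sum f S) B = (\<Sum>x\<in>S. tensor (f x :: 's::finite cmat) (B :: 'c::finite cmat))"
  by (simp add: tensor_def vec_eq_iff sum_component sum_distrib_right)

lemma psd_tensor:
  assumes A: "psd (A :: 's::finite cmat)" and B: "psd (B :: 'c::finite cmat)"
  shows "psd (tensor A B)"
proof -
  obtain f and m :: nat where f: "A = (\<Sum>k<m. ketbra (f k) (f k))" using gram[OF A] by blast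
  obtain g and n :: nat where g: "B = (\<Sum>k<n. ketbra (g k) (g k))" using gram[OF B] by blast
  have eq: "tensor A B = (\<Sum>l<n. \<Sum>k<m. ketbra (kron (f k) (g l)) (kron (f k) (g l)))"
    by (simp add: f g tensor_sum_left tensor_sum_right tensor_ketbra)
  show ?thesis unfolding eq by (intro psd_sum psd_ketbra finite_lessThan)
qed

lemma trace_ketbra_mult: "trace (ketbra u u ** X) = cinner u (X *v u)"
proof -
  have "trace (ketbra u u ** X) = (\<Sum>i\<in>UNIV. \<Sum>k\<in>UNIV. cnj (u$k) * (X$k$i * u$i))"
    by (simp add: trace_def ketbra_def matrix_matrix_mult_def algebra_simps)
  also have "\<dots> = (\<Sum>k\<in>UNIV. \<Sum>i\<in>UNIV. cnj (u$k) * (X$k$i * u$i))"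
    by (rule sum.swap)
  also have "\<dots> = cinner u (X *v u)"
    by (simp add: cinner_def matrix_vector_mult_def sum_distrib_left)
  finally show ?thesis .
qed

lemma psd_trace_mult:
  assumes P: "psd P" and X: "psd X"
  shows "0 \<le> Re (trace (P ** X))"
proof -
  obtain f and m :: nat where f: "P = (\<Sum>k<m. ketbra (f k) (f k))" using gram[OF P] by blast
  have "trace (P ** X) = (\<Sum>k<m. cinner (f k) (X *v f k))"
    by (simp add: f matrix_sum_mult_left trace_sum trace_ketbra_mult)
  then show ?thesis using X by (simp add: Re_sum sum_nonneg psd_iff)
qed

lemma (in bounded_bilinear) Cauchy_product_sums_bil:
  fixes a :: "nat \<Rightarrow> 'a" and b :: "nat \<Rightarrow> 'b"
  assumes a: "summable (\<lambda>k. norm (a k))"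
    and b: "summable (\<lambda>k. norm (b k))"
    and ca: "summable a" and cb: "summable b"
  shows "(\<lambda>k. \<Sum>i\<le>k. prod (a i) (b (k - i))) sums (prod (\<Sum>k. a k) (\<Sum>k. b k))"
proof -
  let ?S1 = "\<lambda>n::nat. {..<n} \<times> {..<n}"
  let ?S2 = "\<lambda>n::nat. {(i,j). i + j < n}"
  have S1_mono: "\<And>m n. m \<le> n \<Longrightarrow> ?S1 m \<subseteq> ?S1 n" by auto
  have S2_le_S1: "\<And>n. ?S2 n \<subseteq> ?S1 n" by auto
  have S1_le_S2: "\<And>n. ?S1 (n div 2) \<subseteq> ?S2 n" by auto
  have finite_S1: "\<And>n. finite (?S1 n)" by simp
  with S2_le_S1 have finite_S2: "\<And>n. finite (?S2 n)" by (rule finite_subset)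
  obtain K where K: "\<And>x y. norm (prod x y) \<le> norm x * norm y * K" using bounded by blast
  let ?g = "\<lambda>(i,j). prod (a i) (b j)"
  let ?f = "\<lambda>(i,j). norm (a i) * norm (b j)"
  have f_nonneg: "\<And>x. 0 \<le> ?f x" by auto
  then have norm_sum_f: "\<And>A. norm (sum ?f A) = sum ?f A"
    unfolding real_norm_def
    by (simp only: abs_of_nonneg sum_nonneg [rule_format])
  have "(\<lambda>n. prod (\<Sum>k<n. a k) (\<Sum>k<n. b k)) \<longlonglongrightarrow> prod (\<Sum>k. a k) (\<Sum>k. b k)"
    by (intro tendsto summable_LIMSEQ ca cb)
  moreover have "prod (\<Sum>k<n. a k) (\<Sum>k<n. b k) = sum ?g (?S1 n)" for n
    unfolding sum_left unfolding sum_right by (simp add: sum.cartesian_product)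
  ultimately have 1: "(\<lambda>n. sum ?g (?S1 n)) \<longlonglongrightarrow> prod (\<Sum>k. a k) (\<Sum>k. b k)"
    by simp
  have "(\<lambda>n. (\<Sum>k<n. norm (a k)) * (\<Sum>k<n. norm (b k))) \<longlonglongrightarrow> (\<Sum>k. norm (a k)) * (\<Sum>k. norm (b k))"
    using a b by (intro tendsto_mult summable_LIMSEQ)
  then have "(\<lambda>n. sum ?f (?S1 n)) \<longlonglongrightarrow> (\<Sum>k. norm (a k)) * (\<Sum>k. norm (b k))"
    by (simp only: sum_product sum.Sigma [rule_format] finite_lessThan)
  then have "convergent (\<lambda>n. sum ?f (?S1 n))"
    by (rule convergentI)
  then have Cauchy: "Cauchy (\<lambda>n. sum ?f (?S1 n))"
    by (rule convergent_Cauchy)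
  have "Zfun (\<lambda>n. sum ?f (?S1 n - ?S2 n)) sequentially"
  proof (rule ZfunI, simp only: eventually_sequentially norm_sum_f)
    fix r :: real
    assume r: "0 < r"
    from CauchyD [OF Cauchy r] obtain N
      where "\<forall>m\<ge>N. \<forall>n\<ge>N. norm (sum ?f (?S1 m) - sum ?f (?S1 n)) < r" ..
    then have "\<And>m n. N \<le> n \<Longrightarrow> n \<le> m \<Longrightarrow> norm (sum ?f (?S1 m - ?S1 n)) < r"
      by (simp only: sum_diff finite_S1 S1_mono)
    then have N: "\<And>m n. N \<le> n \<Longrightarrow> n \<le> m \<Longrightarrow> sum ?f (?S1 m - ?S1 n) < r"
      by (simp only: norm_sum_f)
    show "\<exists>N. \<forall>n\<ge>N. sum ?f (?S1 n - ?S2 n) < r"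
    proof (intro exI allI impI)
      fix n
      assume "2 * N \<le> n"
      then have n: "N \<le> n div 2" by simp
      have "sum ?f (?S1 n - ?S2 n) \<le> sum ?f (?S1 n - ?S1 (n div 2))"
        by (intro sum_mono2 finite_Diff finite_S1 f_nonneg Diff_mono subset_refl S1_le_S2)
      also have "\<dots> < r"
        using n div_le_dividend by (rule N)
      finally show "sum ?f (?S1 n - ?S2 n) < r" .
    qed
  qed
  then have "Zfun (\<lambda>n. sum ?g (?S1 n - ?S2 n)) sequentially"
  proof (rule Zfun_imp_Zfun[where K = K], intro always_eventually allI)
    fix n
    have "norm (sum ?g (?S1 n - ?S2 n)) \<le> (\<Sum>x\<in>?S1 n - ?S2 n. norm (?g x))"
      by (rule norm_sum)
    also have "\<dots> \<le> (\<Sum>x\<in>?S1 n - ?S2 n. ?f x * K)"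
      by (intro sum_mono) (auto simp: K)
    also have "\<dots> = norm (sum ?f (?S1 n - ?S2 n)) * K"
      by (simp only: norm_sum_f sum_distrib_right)
    finally show "norm (sum ?g (?S1 n - ?S2 n)) \<le> norm (sum ?f (?S1 n - ?S2 n)) * K" .
  qed
  then have 2: "(\<lambda>n. sum ?g (?S1 n) - sum ?g (?S2 n)) \<longlonglongrightarrow> 0"
    unfolding tendsto_Zfun_iff diff_0_right
    by (simp only: sum_diff finite_S1 S2_le_S1)
  with 1 have "(\<lambda>n. sum ?g (?S2 n)) \<longlonglongrightarrow> prod (\<Sum>k. a k) (\<Sum>k. b k)"
    by (rule Lim_transform2)
  then show ?thesis
    by (simp only: sums_def sum.triangle_reindex)
qed

lemma funpow_bound:
  assumes L: "bounded_linear (L :: 'a::real_normed_vector \<Rightarrow> 'a)"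
  obtains K where "K > 0" "\<And>k x. norm ((L ^^ k) x) \<le> K ^ k * norm x"
proof -
  obtain K where K: "K > 0" "\<And>x. norm (L x) \<le> norm x * K"
    using bounded_linear.pos_bounded[OF L] by blast
  have "norm ((L ^^ k) x) \<le> K ^ k * norm x" for k x
  proof (induction k)
    case 0 then show ?case by simp
  next
    case (Suc k)
    have "norm ((L ^^ Suc k) x) \<le> norm ((L ^^ k) x) * K" using K(2) by simp
    also have "\<dots> \<le> K ^ k * norm x * K" using Suc K(1) by (intro mult_right_mono) auto
    finally show ?case by (simp add: algebra_simps)
  qed
  then show ?thesis using K(1) that by blast
qed

lemma superop_summable_norm:
  assumes L: "bounded_linear (L :: 'a::real_normed_vector \<Rightarrow> 'a)"
  shows "summable (\<lambda>k. norm ((t ^ k / fact k) *\<^sub>R (L ^^ k) X))"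
proof -
  obtain K where K: "K > 0" "\<And>k x. norm ((L ^^ k) x) \<le> K ^ k * norm x"
    using funpow_bound[OF L] by blast
  have s: "summable (\<lambda>k. inverse (fact k) * (K * \<bar>t\<bar>) ^ k * norm X)"
    by (intro summable_mult2 summable_exp)
  show ?thesis
  proof (rule summable_comparison_test[OF _ s], intro exI allI impI)
    fix k :: nat
    have "norm (norm ((t ^ k / fact k) *\<^sub>R (L ^^ k) X)) = \<bar>t\<bar> ^ k / fact k * norm ((L ^^ k) X)"
      by (simp add: power_abs)
    also have "\<dots> \<le> \<bar>t\<bar> ^ k / fact k * (K ^ k * norm X)"
      by (intro mult_left_mono K(2)) auto
    also have "\<dots> = inverse (fact k) * (K * \<bar>t\<bar>) ^ k * norm X"
      by (simp add: power_mult_distrib field_simps)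
    finally show "norm (norm ((t ^ k / fact k) *\<^sub>R (L ^^ k) X)) \<le> inverse (fact k) * (K * \<bar>t\<bar>) ^ k * norm X" .
  qed
qed

lemma superop_summable:
  assumes L: "bounded_linear (L :: 'a::banach \<Rightarrow> 'a)"
  shows "summable (\<lambda>k. (t ^ k / fact k) *\<^sub>R (L ^^ k) X)"
  by (rule summable_norm_cancel[OF superop_summable_norm[OF L]])

lemma superop_exp_funct:
  assumes L: "bounded_linear (L :: ('n::finite) cmat \<Rightarrow> 'n cmat)"
    and phi: "bounded_linear (\<phi> :: 'n cmat \<Rightarrow> real)"
  shows "\<phi> (superop_exp t L X) = (\<Sum>k. (\<phi> ((L ^^ k) X) / fact k) * t ^ k)"
    and "summable (\<lambda>k. (\<phi> ((L ^^ k) X) / fact k) * t ^ k)"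
proof -
  have eq: "\<phi> ((t ^ k / fact k) *\<^sub>R (L ^^ k) X) = (\<phi> ((L ^^ k) X) / fact k) * t ^ k" for k
    by (simp add: linear.scaleR[OF bounded_linear.linear[OF phi]])
  show "\<phi> (superop_exp t L X) = (\<Sum>k. (\<phi> ((L ^^ k) X) / fact k) * t ^ k)"
    unfolding superop_exp_def bounded_linear.suminf[OF phi superop_summable[OF L]] eq ..
  show "summable (\<lambda>k. (\<phi> ((L ^^ k) X) / fact k) * t ^ k)"
    using bounded_linear.summable[OF phi superop_summable[OF L, of t X]] unfolding eq .
qed

lemma superop_exp_deriv:
  assumes L: "bounded_linear (L :: ('n::finite) cmat \<Rightarrow> 'n cmat)"
    and phi: "bounded_linear (\<phi> :: 'n cmat \<Rightarrow> real)"
  shows "((\<lambda>t. \<phi> (superop_exp t L X)) has_real_derivative \<phi> (superop_exp t L (L X))) (at t)"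
proof -
  define c where "c k = \<phi> ((L ^^ k) X) / fact k" for k
  have d: "diffs c = (\<lambda>k. \<phi> ((L ^^ k) (L X)) / fact k)"
  proof (rule ext)
    fix k
    have "diffs c k = of_nat (Suc k) * (\<phi> ((L ^^ k) (L X)) / (of_nat (Suc k) * fact k))"
      by (simp add: diffs_def c_def funpow_Suc_right fact_Suc del: funpow.simps of_nat_Suc)
    also have "\<dots> = \<phi> ((L ^^ k) (L X)) / fact k"
      by (simp del: of_nat_Suc)
    finally show "diffs c k = \<phi> ((L ^^ k) (L X)) / fact k" .
  qed
  have "((\<lambda>x. \<Sum>n. c n * x^n) has_real_derivative (\<Sum>n. diffs c n * t^n)) (at t)"
    by (rule termdiffs_strong_converges_everywhere) (use superop_exp_funct(2)[OF L phi] in \<open>simp add: c_def\<close>)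
  then show ?thesis
    unfolding superop_exp_funct(1)[OF L phi] d c_def .
qed

lemma superop_exp_comm:
  assumes L: "bounded_linear (L :: ('n::finite) cmat \<Rightarrow> 'n cmat)"
  shows "superop_exp t L (L X) = L (superop_exp t L X)"
proof -
  have "L (superop_exp t L X) = (\<Sum>k. L ((t ^ k / fact k) *\<^sub>R (L ^^ k) X))"
    unfolding superop_exp_def by (rule bounded_linear.suminf[OF L superop_summable[OF L]])
  also have "\<dots> = superop_exp t L (L X)"
    unfolding superop_exp_def by (simp add: linear.scaleR[OF bounded_linear.linear[OF L]] funpow_swap1)
  finally show ?thesis by simp
qed

lemma superop_exp_0: "superop_exp 0 L X = X"
proof -
  have "(\<lambda>k. ((0::real) ^ k / fact k) *\<^sub>R (L ^^ k) X) = (\<lambda>k. if k = 0 then (L ^^ k) X else 0)"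
    by (rule ext) simp
  then show ?thesis unfolding superop_exp_def using sums_single[of 0 "\<lambda>k. (L ^^ k) X"]
    by (simp add: sums_iff)
qed

lemma mat_scaleR_left: "(r *\<^sub>R X) ** Y = r *\<^sub>R (X ** (Y::'n::finite cmat))"
  by (simp add: matrix_matrix_mult_def vec_eq_iff scaleR_sum_right)
lemma mat_scaleR_right: "X ** (r *\<^sub>R Y) = r *\<^sub>R (X ** (Y::'n::finite cmat))"
  by (simp add: matrix_matrix_mult_def vec_eq_iff scaleR_sum_right)
lemma matrix_add_rdistrib': "(B + C) ** A = B ** A + C ** (A::'n::finite cmat)"
  by (simp add: matrix_matrix_mult_def vec_eq_iff sum.distrib algebra_simps)

lemma bl_left: "bounded_linear (\<lambda>X. A ** (X::'n::finite cmat))"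
  unfolding linear_conv_bounded_linear[symmetric]
  by (intro linearI) (simp_all add: matrix_add_ldistrib mat_scaleR_right)
lemma bl_right: "bounded_linear (\<lambda>X. (X::'n::finite cmat) ** (B::'n cmat))"
  unfolding linear_conv_bounded_linear[symmetric]
  by (intro linearI) (simp_all add: matrix_add_rdistrib' mat_scaleR_left)
lemma bl_cadj: "bounded_linear (cadj :: 'n::finite cmat \<Rightarrow> 'n cmat)"
  unfolding linear_conv_bounded_linear[symmetric]
  by (intro linearI) (simp_all add: cadj_add cadj_scaleR)

definition Lop :: "('n::finite) cmat \<Rightarrow> 'n cmat \<Rightarrow> 'n cmat \<Rightarrow> 'n cmat" where
  "Lop A B X = A ** X + X ** B"

lemma bl_Lop: "bounded_linear (Lop A B)"
  unfolding Lop_def by (intro bounded_linear_add bl_left bl_right)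

definition expm :: "real \<Rightarrow> ('n::finite) cmat \<Rightarrow> 'n cmat" where
  "expm t A = superop_exp t (\<lambda>X. A ** X) (mat 1)"

lemma funpow_left: "((\<lambda>X. A ** X) ^^ k) (mat 1) = mpow A k"
  by (induction k) simp_all

lemma expm_alt: "expm t A = (\<Sum>k. (t ^ k / fact k) *\<^sub>R mpow A k)"
  unfolding expm_def superop_exp_def funpow_left ..

lemma expm_summable_norm: "summable (\<lambda>k. norm ((t ^ k / fact k) *\<^sub>R mpow A k))"
  using superop_summable_norm[OF bl_left, of t A "mat 1"] unfolding funpow_left .

lemma expm_summable: "summable (\<lambda>k. (t ^ k / fact k) *\<^sub>R mpow A k)"
  by (rule summable_norm_cancel[OF expm_summable_norm])

lemma cadj_expm: "cadj (expm t A) = expm t (cadj A)"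
  unfolding expm_alt bounded_linear.suminf[OF bl_cadj expm_summable]
  by (simp add: cadj_scaleR cadj_mpow)

lemma Lop_binomial:
  "(Lop A B ^^ n) X = (\<Sum>k\<le>n. of_nat (n choose k) *\<^sub>R (mpow A k ** X ** mpow B (n - k)))"
proof (induction n)
  case 0 then show ?case by simp
next
  case (Suc n)
  define T where "T k m = mpow A k ** X ** mpow B m" for k m
  have LT: "Lop A B (T k m) = T (Suc k) m + T k (Suc m)" for k m
  proof -
    have "mpow A (Suc k) = A ** mpow A k" "mpow B (Suc m) = mpow B m ** B"
      by (simp, rule mpow_Suc')
    then show ?thesis by (simp only: Lop_def T_def matrix_mul_assoc)
  qed
  have lin: "Lop A B (\<Sum>k\<le>n. c k *\<^sub>R Y k) = (\<Sum>k\<le>n. c k *\<^sub>R Lop A B (Y k))" for c Y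
    using bl_Lop[of A B] by (simp add: linear_sum linear.scaleR bounded_linear.linear)
  define g where "g k = of_nat (n choose k) *\<^sub>R T k (Suc n - k)" for k
  have "(Lop A B ^^ Suc n) X = (\<Sum>k\<le>n. of_nat (n choose k) *\<^sub>R (T (Suc k) (n - k) + T k (Suc (n - k))))"
    by (simp add: Suc.IH T_def[symmetric] lin LT)
  also have "\<dots> = (\<Sum>k\<le>n. of_nat (n choose k) *\<^sub>R T (Suc k) (n - k)) + (\<Sum>k\<le>n. g k)"
    by (simp add: scaleR_add_right sum.distrib g_def Suc_diff_le)
  also have "(\<Sum>k\<le>n. g k) = (\<Sum>k\<le>Suc n. g k)"
    by (simp add: g_def)
  also have "\<dots> = g 0 + (\<Sum>k\<le>n. g (Suc k))"
    by (rule sum.atMost_Suc_shift)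
  also have "(\<Sum>k\<le>n. of_nat (n choose k) *\<^sub>R T (Suc k) (n - k)) + (g 0 + (\<Sum>k\<le>n. g (Suc k)))
      = T 0 (Suc n) + (\<Sum>k\<le>n. of_nat (Suc n choose Suc k) *\<^sub>R T (Suc k) (n - k))"
    by (simp add: g_def sum.distrib scaleR_add_left)
  also have "\<dots> = (\<Sum>k\<le>Suc n. of_nat (Suc n choose k) *\<^sub>R T k (Suc n - k))"
    by (subst sum.atMost_Suc_shift) simp
  finally show ?case by (simp add: T_def)
qed

lemma bbil_sandwich: "bounded_bilinear (\<lambda>(a::'n::finite cmat) b. a ** (X::'n::finite cmat) ** (b::'n cmat))"
  unfolding bilinear_conv_bounded_bilinear[symmetric] bilinear_def
  by (auto intro!: linearI simp: matrix_add_ldistrib matrix_add_rdistrib' mat_scaleR_left mat_scaleR_right)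

lemma superop_exp_sandwich:
  "superop_exp t (Lop A (cadj A)) X = expm t A ** X ** cadj (expm t A)"
proof -
  define a where "a k = (t ^ k / fact k) *\<^sub>R mpow A k" for k
  define b where "b k = (t ^ k / fact k) *\<^sub>R mpow (cadj A) k" for k
  have S: "(\<lambda>n. \<Sum>i\<le>n. a i ** X ** b (n - i)) sums (expm t A ** X ** expm t (cadj A))"
    unfolding expm_alt a_def b_def
    by (rule bounded_bilinear.Cauchy_product_sums_bil[OF bbil_sandwich expm_summable_norm
          expm_summable_norm expm_summable expm_summable])
  have T: "(\<Sum>i\<le>n. a i ** X ** b (n - i)) = (t ^ n / fact n) *\<^sub>R (Lop A (cadj A) ^^ n) X" for n
  proof -
    have "(t ^ n / fact n) *\<^sub>R (Lop A (cadj A) ^^ n) X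
       = (\<Sum>k\<le>n. (t ^ n / fact n * of_nat (n choose k)) *\<^sub>R (mpow A k ** X ** mpow (cadj A) (n - k)))"
      by (simp add: Lop_binomial scaleR_sum_right)
    also have "\<dots> = (\<Sum>k\<le>n. a k ** X ** b (n - k))"
    proof (rule sum.cong[OF refl])
      fix k assume "k \<in> {..n}"
      then have k: "k \<le> n" by simp
      have "t ^ n / fact n * of_nat (n choose k) = (t ^ k / fact k) * (t ^ (n - k) / fact (n - k))"
        using k by (simp add: binomial_fact power_add[symmetric] field_simps)
      then show "(t ^ n / fact n * of_nat (n choose k)) *\<^sub>R (mpow A k ** X ** mpow (cadj A) (n - k))
          = a k ** X ** b (n - k)"
        by (simp add: a_def b_def mat_scaleR_left mat_scaleR_right mult_ac)
    qed
    finally show ?thesis by simp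
  qed
  show ?thesis
    using S unfolding T cadj_expm superop_exp_def by (simp add: sums_iff)
qed

lemma sqrt_le_amgm:
  fixes x c :: real
  assumes "0 \<le> x" "0 < c"
  shows "sqrt x \<le> (1 / (2 * c)) * x + c / 2"
proof -
  have "0 \<le> (sqrt x - c)^2" by simp
  then have "0 \<le> x - 2 * c * sqrt x + c^2" using assms by (simp add: power2_eq_square algebra_simps)
  then have "2 * c * sqrt x \<le> x + c^2" by simp
  then show ?thesis using assms by (simp add: field_simps power2_eq_square)
qed

lemma sqrt_integral:
  fixes f :: "real \<Rightarrow> real"
  assumes cont: "continuous_on {0..T} f" and nn: "\<And>t. t \<in> {0..T} \<Longrightarrow> 0 \<le> f t" and T: "0 \<le> T"
  shows "integral {0..T} (\<lambda>t. sqrt (f t)) \<le> sqrt (T * integral {0..T} f)"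
proof -
  define I where "I = integral {0..T} f"
  define J where "J = integral {0..T} (\<lambda>t. sqrt (f t))"
  have intf: "f integrable_on {0..T}" by (rule integrable_continuous_interval[OF cont])
  have ints: "(\<lambda>t. sqrt (f t)) integrable_on {0..T}"
    by (rule integrable_continuous_interval) (intro continuous_intros cont)
  have I0: "0 \<le> I" unfolding I_def by (rule integral_nonneg[OF intf nn])
  have bound: "J \<le> (1 / (2 * c)) * I + T * (c / 2)" if c: "0 < c" for c
  proof -
    have int2: "(\<lambda>t. (1 / (2 * c)) * f t + c / 2) integrable_on {0..T}"
      by (intro integrable_continuous_interval continuous_intros cont)
    have "J \<le> integral {0..T} (\<lambda>t. (1 / (2 * c)) * f t + c / 2)"
      unfolding J_def by (rule integral_le[OF ints int2]) (use nn c sqrt_le_amgm in auto)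
    also have "\<dots> = integral {0..T} (\<lambda>t. (1 / (2 * c)) * f t) + integral {0..T} (\<lambda>t. c / 2)"
      by (rule integral_add) (intro integrable_continuous_interval continuous_intros cont)+
    also have "\<dots> = (1 / (2 * c)) * I + T * (c / 2)"
      using T by (simp add: I_def content_real)
    finally show ?thesis .
  qed
  show ?thesis
  proof (cases "T = 0 \<or> I = 0")
    case True
    have "J \<le> 0"
    proof (rule ccontr)
      assume "\<not> J \<le> 0"
      then have Jp: "J > 0" by simp
      show False
      proof (cases "T = 0")
        case True
        then have "J = 0" by (simp add: J_def)
        then show False using Jp by simp
      next
        case False
        then have Tp: "T > 0" using T by simp
        then have I: "I = 0" using True by simp
        have "J \<le> T * (J / T / 2)" using bound[of "J / T"] Jp Tp I by simp
        also have "\<dots> = J / 2" using Tp by simp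
        finally show False using Jp by simp
      qed
    qed
    then show ?thesis unfolding J_def I_def[symmetric] by (metis real_sqrt_ge_zero order_trans
          mult_nonneg_nonneg T I0)
  next
    case False
    then have Tp: "T > 0" and Ip: "I > 0" using T I0 by auto
    define c where "c = sqrt (I / T)"
    have cp: "c > 0" using Tp Ip by (simp add: c_def)
    have c2: "c * c = I / T" using Tp Ip by (simp add: c_def)
    have "(1 / (2 * c)) * I + T * (c / 2) = (I + T * c * c) / (2 * c)"
      using cp by (simp add: field_simps)
    also have "\<dots> = I / c" using c2 Tp by (simp add: field_simps)
    also have "\<dots> = sqrt (T * I)"
    proof -
      have "sqrt (T * I) * c = sqrt (T * I) * sqrt (I / T)" by (simp add: c_def)
      also have "\<dots> = sqrt (T * I * (I / T))" by (rule real_sqrt_mult[symmetric])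
      also have "\<dots> = sqrt (I * I)" using Tp by (simp add: field_simps)
      also have "\<dots> = I" using I0 by simp
      finally show ?thesis using cp by (simp add: field_simps)
    qed
    finally show ?thesis using bound[OF cp] unfolding J_def I_def by simp
  qed
qed

lemma final_arith:
  fixes I N T :: real
  assumes I0: "0 \<le> I" and IN: "I \<le> N * T" and N: "0 \<le> N" and T: "0 \<le> T"
  shows "sqrt (T * (N * I)) \<le> (N * T) powr (3/4) * I powr (1/4)"
proof -
  have NT: "0 \<le> N * T" using N T by simp
  have "sqrt (T * (N * I)) = ((N * T) * I) powr (1/2)"
    using NT I0 by (simp add: powr_half_sqrt algebra_simps)
  also have "\<dots> = (N * T) powr (1/2) * (I powr (1/4) * I powr (1/4))"
    by (simp add: powr_mult flip: powr_add)
  also have "\<dots> \<le> (N * T) powr (1/2) * (I powr (1/4) * (N * T) powr (1/4))"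
    by (intro mult_left_mono powr_mono2 IN I0) auto
  also have "\<dots> = (N * T) powr (3/4) * I powr (1/4)"
    by (simp add: algebra_simps flip: powr_add)
  finally show ?thesis .
qed

lemma csmult_diff: "csmult c (A - B) = csmult c A - csmult c (B::'n::finite cmat)"
  by (simp add: csmult_def vec_eq_iff algebra_simps)
lemma csmult_add: "csmult c (A + B) = csmult c A + csmult c (B::'n::finite cmat)"
  by (simp add: csmult_def vec_eq_iff algebra_simps)
lemma csmult_neg: "csmult (- c) A = - csmult c (A::'n::finite cmat)"
  by (simp add: csmult_def vec_eq_iff)
lemma csmult_csmult: "csmult a (csmult b A) = csmult (a * b) (A::'n::finite cmat)"
  by (simp add: csmult_def vec_eq_iff)
lemma csmult_sum: "csmult c (sum f S) = (\<Sum>x\<in>S. csmult c (f x :: 'n::finite cmat))"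
  by (simp add: csmult_def vec_eq_iff sum_component sum_distrib_left)
lemma mat_diff_left: "(A - B) ** C = A ** C - B ** (C::'n::finite cmat)"
  by (simp add: matrix_matrix_mult_def vec_eq_iff sum_subtractf algebra_simps)
lemma mat_diff_right: "C ** (A - B) = C ** A - C ** (B::'n::finite cmat)"
  by (simp add: matrix_matrix_mult_def vec_eq_iff sum_subtractf algebra_simps)
lemma mat_neg_left: "(- A) ** C = - (A ** (C::'n::finite cmat))"
  by (simp add: matrix_matrix_mult_def vec_eq_iff sum_negf)

lemma trace_scaleR: "trace (r *\<^sub>R A) = of_real r * trace (A::'n::finite cmat)"
proof -
  have "trace (r *\<^sub>R A) = r *\<^sub>R trace A" by (simp add: trace_def scaleR_sum_right)
  then show ?thesis by (simp add: scaleR_conv_of_real)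
qed

lemma VC_herm: "cadj (VC J) = VC J"
  unfolding VC_def by (simp add: cadj_csmult cadj_sum cadj_mult)

definition Aop :: "(('s::finite) \<times> ('c::finite)) cmat \<Rightarrow> ('k::finite \<Rightarrow> 'c cmat) \<Rightarrow> ('s \<times> 'c) cmat" where
  "Aop H J = csmult (- \<i>) H - tensor (mat 1) (VC J)"

lemma Lnore_Lop:
  assumes "hermitian H"
  shows "Lnore H J = Lop (Aop H J) (cadj (Aop H J))"
proof -
  have cH: "cadj H = H" using assms by (simp add: hermitian_def)
  have cA: "cadj (csmult (- \<i>) H - tensor (mat 1) (VC J)) = csmult \<i> H - tensor (mat 1) (VC J)"
    by (simp add: cadj_diff cadj_csmult cadj_tensor VC_herm cH)
  show ?thesis
    unfolding Aop_def cA
    by (rule ext) (simp add: Lnore_def Lop_def mat_diff_left mat_diff_right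
        csmult_mult_left csmult_mult_right csmult_diff csmult_neg mat_neg_left algebra_simps)
qed

lemma bl_Lnore: "hermitian H \<Longrightarrow> bounded_linear (Lnore H J)"
  using Lnore_Lop bl_Lop by metis

lemma psd_evol: "hermitian H \<Longrightarrow> psd X \<Longrightarrow> psd (superop_exp t (Lnore H J) X)"
  by (simp add: Lnore_Lop superop_exp_sandwich psd_conj)

lemma psd_Dre: "psd X \<Longrightarrow> psd (Dre J X)"
  unfolding Dre_def by (auto intro!: psd_sum psd_conj)

lemma trace_zero: "trace (0::'n::finite cmat) = 0"
  by (simp add: trace_def)

lemma rho_ren_props:
  assumes H: "hermitian H" and S: "density rhoS0" and C: "density rho0"
  shows "psd (rho_ren H J rhoS0 rho0 tau l) \<and>
         (trace (rho_ren H J rhoS0 rho0 tau l) = 0 \<or> trace (rho_ren H J rhoS0 rho0 tau l) = 1)"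
proof (induction l)
  case 0
  show ?case using S C by (simp add: density_def psd_tensor trace_tensor)
next
  case (Suc l)
  define Y where "Y = Dre J (superop_exp (tau (Suc l) - tau l) (Lnore H J) (rho_ren H J rhoS0 rho0 tau l))"
  have Y: "psd Y" unfolding Y_def using Suc H by (intro psd_Dre psd_evol) auto
  have eq: "rho_ren H J rhoS0 rho0 tau (Suc l) = csmult (1 / trace Y) Y"
    by (simp add: Y_def Let_def)
  obtain y where y: "trace Y = of_real y" "0 \<le> y" using psd_trace[OF Y] by blast
  show ?case
  proof (cases "y = 0")
    case True
    then show ?thesis unfolding eq by (simp add: y psd_zero trace_zero)
  next
    case False
    have "csmult (1 / trace Y) Y = csmult (of_real (1 / y)) Y" by (simp add: y)
    moreover have "psd (csmult (of_real (1 / y)) Y)" using y by (intro psd_csmult Y) auto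
    moreover have "trace (csmult (of_real (1 / y)) Y) = 1" using False by (simp add: trace_csmult y)
    ultimately show ?thesis unfolding eq by simp
  qed
qed

definition trf :: "('n::finite) cmat \<Rightarrow> 'n cmat \<Rightarrow> real" where
  "trf P X = Re (trace (P ** X))"

lemma bl_trf: "bounded_linear (trf P)"
  unfolding linear_conv_bounded_linear[symmetric] trf_def
  by (intro linearI) (simp_all add: matrix_add_ldistrib trace_add mat_scaleR_right trace_scaleR)

lemma psd_VC:
  fixes vv :: "'c::finite \<Rightarrow> complex^'c" and J :: "'k::finite \<Rightarrow> 'c cmat"
  assumes spec_dec: "VC J = (\<Sum>j\<in>UNIV. csmult (complex_of_real (v j)) (ketbra (vv j) (vv j)))"
    and v_nonneg: "\<forall>j. 0 \<le> v j"
  shows "psd (VC J)"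
  unfolding spec_dec using v_nonneg by (auto intro!: psd_sum psd_csmult psd_ketbra)

lemma trace_Lnore: "trace (Lnore H J Z) = - 2 * trace (tensor (mat 1) (VC J) ** Z)"
  by (simp add: Lnore_def trace_csmult trace_sub trace_add trace_mul_sym[of Z])

lemma trace_decr:
  assumes H: "hermitian H" and V: "psd (VC J)" and X: "psd X" and t: "0 \<le> t"
  shows "trf (mat 1) (superop_exp t (Lnore H J) X) \<le> trf (mat 1) X"
proof -
  have L: "bounded_linear (Lnore H J)" by (rule bl_Lnore[OF H])
  have "trf (mat 1) (superop_exp t (Lnore H J) X) \<le> trf (mat 1) (superop_exp 0 (Lnore H J) X)"
  proof (rule DERIV_nonpos_imp_nonincreasing[OF t])
    fix x :: real
    have d: "((\<lambda>s. trf (mat 1) (superop_exp s (Lnore H J) X)) has_real_derivative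
        trf (mat 1) (superop_exp x (Lnore H J) (Lnore H J X))) (at x)"
      by (rule superop_exp_deriv[OF L bl_trf])
    have "trf (mat 1) (superop_exp x (Lnore H J) (Lnore H J X))
        = trf (mat 1) (Lnore H J (superop_exp x (Lnore H J) X))"
      by (simp add: superop_exp_comm[OF L])
    also have "\<dots> = - 2 * Re (trace (tensor (mat 1) (VC J) ** superop_exp x (Lnore H J) X))"
      by (simp add: trf_def trace_Lnore)
    also have "\<dots> \<le> 0"
      using psd_trace_mult[OF psd_tensor[OF psd_mat1 V] psd_evol[OF H X]] by simp
    finally show "\<exists>y. ((\<lambda>s. trf (mat 1) (superop_exp s (Lnore H J) X)) has_real_derivative y) (at x) \<and> y \<le> 0"
      using d by blast
  qed
  then show ?thesis by (simp add: superop_exp_0)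
qed

lemma funct_cont:
  assumes H: "hermitian H"
  shows "continuous_on S (\<lambda>t. trf P (superop_exp t (Lnore H J) X))"
  by (rule continuous_at_imp_continuous_on, intro ballI DERIV_isCont)
     (rule superop_exp_deriv[OF bl_Lnore[OF H] bl_trf])

lemma onb_complete:
  fixes vv :: "'c::finite \<Rightarrow> complex^'c"
  assumes spec_onb: "\<forall>i j. cinner (vv i) (vv j) = (if i = j then 1 else 0)"
  shows "(\<Sum>j\<in>UNIV. ketbra (vv j) (vv j)) = (mat 1 :: ('c::finite) cmat)"
proof -
  define U :: "'c cmat" where "U = (\<chi> i j. vv j $ i)"
  have "cadj U ** U = mat 1"
    using spec_onb by (simp add: U_def cadj_def matrix_matrix_mult_def cinner_def mat_def vec_eq_iff)
  then have "U ** cadj U = mat 1" by (simp add: matrix_left_right_inverse)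
  moreover have "U ** cadj U = (\<Sum>j\<in>UNIV. ketbra (vv j) (vv j))"
    by (simp add: U_def cadj_def matrix_matrix_mult_def ketbra_def vec_eq_iff sum_component)
  ultimately show ?thesis by simp
qed

lemma mv_scaleR_right: "A *v (r *\<^sub>R x) = r *\<^sub>R (A *v (x::complex^'n::finite))"
  by (simp add: matrix_vector_mult_def vec_eq_iff scaleR_sum_right)

lemma bl_mv: "bounded_linear (\<lambda>x. (A::'n::finite cmat) *v x)"
  unfolding linear_conv_bounded_linear[symmetric]
  by (intro linearI) (simp_all add: mv_add_right mv_scaleR_right)

lemma v_le_opnorm:
  fixes vv :: "'c::finite \<Rightarrow> complex^'c" and J :: "'k::finite \<Rightarrow> 'c cmat"
  assumes spec_onb: "\<forall>i j. cinner (vv i) (vv j) = (if i = j then 1 else 0)"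
    and spec_dec: "VC J = (\<Sum>j\<in>UNIV. csmult (complex_of_real (v j)) (ketbra (vv j) (vv j)))"
    and v_nonneg: "\<forall>j. 0 \<le> v j"
  shows "v j \<le> opnorm (VC J)"
proof -
  have eig: "VC J *v vv j = v j *\<^sub>R vv j"
  proof -
    have "VC J *v vv j = (\<Sum>k\<in>UNIV. (complex_of_real (v k) * cinner (vv k) (vv j)) *s vv k)"
      by (simp add: spec_dec mv_sum mv_csmult ketbra_mv vector_smult_assoc)
    also have "\<dots> = (\<Sum>k\<in>UNIV. if k = j then complex_of_real (v j) *s vv j else 0)"
      by (rule sum.cong) (auto simp: spec_onb)
    also have "\<dots> = complex_of_real (v j) *s vv j" by simp
    also have "\<dots> = v j *\<^sub>R vv j"
      by (simp only: vec_eq_iff vector_scaleR_component vector_smult_component) (simp add: scaleR_conv_of_real)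
    finally show ?thesis .
  qed
  have n1: "norm (vv j) = 1"
  proof -
    have c1: "cinner (vv j) (vv j) = 1" using spec_onb by simp
    have "complex_of_real (\<Sum>i\<in>UNIV. (cmod (vv j $ i))^2) = 1" by (metis c1 cinner_self)
    then have "(\<Sum>i\<in>UNIV. (cmod (vv j $ i))^2) = 1" by (simp only: of_real_eq_1_iff)
    then show ?thesis by (simp add: norm_vec_def L2_set_def)
  qed
  have "norm (VC J *v vv j) \<le> opnorm (VC J) * norm (vv j)"
    unfolding opnorm_def by (rule onorm[OF bl_mv])
  then show ?thesis using eig n1 v_nonneg by simp
qed

lemma wmean_sq:
  fixes v p :: "'a \<Rightarrow> real"
  assumes A: "finite A" and p: "\<forall>j\<in>A. 0 \<le> p j" and v: "\<forall>j\<in>A. 0 \<le> v j" and S: "sum p A \<le> 1"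
  shows "(\<Sum>j\<in>A. v j * p j) \<le> sqrt (\<Sum>j\<in>A. (v j)^2 * p j)"
proof -
  define m where "m = (\<Sum>j\<in>A. v j * p j)"
  have m0: "0 \<le> m" unfolding m_def using p v by (auto intro!: sum_nonneg)
  have "0 \<le> (\<Sum>j\<in>A. (v j - m)^2 * p j)" using p by (auto intro!: sum_nonneg)
  also have "(\<Sum>j\<in>A. (v j - m)^2 * p j)
      = (\<Sum>j\<in>A. (v j)^2 * p j) - 2 * m * (\<Sum>j\<in>A. v j * p j) + m^2 * sum p A"
    by (simp add: power2_diff algebra_simps sum.distrib sum_subtractf sum_distrib_left sum_distrib_right)
  finally have "2 * m^2 - m^2 * sum p A \<le> (\<Sum>j\<in>A. (v j)^2 * p j)"
    by (simp add: m_def power2_eq_square)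
  moreover have "m^2 \<le> 2 * m^2 - m^2 * sum p A"
  proof -
    have "sum p A * m^2 \<le> 1 * m^2" using S by (intro mult_right_mono) auto
    then show ?thesis by (simp add: mult.commute)
  qed
  ultimately have "m^2 \<le> (\<Sum>j\<in>A. (v j)^2 * p j)" by linarith
  then show ?thesis unfolding m_def[symmetric] by (rule real_le_rsqrt)
qed

lemma trace_Dre:
  fixes J :: "'k::finite \<Rightarrow> ('c::finite) cmat" and Z :: "('s::finite \<times> 'c) cmat"
  shows "trace (Dre J Z) = trace (tensor (mat 1 :: 's cmat) (csmult 2 (VC J)) ** Z)"
proof -
  have e1: "trace (tensor (mat 1) (J j) ** Z ** cadj (tensor (mat 1 :: 's cmat) (J j)))
      = trace (tensor (mat 1) (cadj (J j) ** J j) ** Z)" for j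
  proof -
    have "trace (tensor (mat 1) (J j) ** Z ** cadj (tensor (mat 1 :: 's cmat) (J j)))
        = trace (cadj (tensor (mat 1 :: 's cmat) (J j)) ** (tensor (mat 1) (J j) ** Z))"
      by (rule trace_mul_sym)
    also have "\<dots> = trace ((cadj (tensor (mat 1 :: 's cmat) (J j)) ** tensor (mat 1) (J j)) ** Z)"
      by (simp add: matrix_mul_assoc)
    also have "cadj (tensor (mat 1 :: 's cmat) (J j)) ** tensor (mat 1) (J j) = tensor (mat 1) (cadj (J j) ** J j)"
      by (simp add: cadj_tensor tensor_mult)
    finally show ?thesis .
  qed
  have S: "(\<Sum>j\<in>UNIV. cadj (J j) ** J j) = csmult 2 (VC J)"
    by (simp add: VC_def csmult_csmult)
  have "trace (Dre J Z) = (\<Sum>j\<in>UNIV. trace (tensor (mat 1 :: 's cmat) (cadj (J j) ** J j) ** Z))"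
    by (simp add: Dre_def trace_sum e1)
  also have "\<dots> = trace (tensor (mat 1 :: 's cmat) (\<Sum>j\<in>UNIV. cadj (J j) ** J j) ** Z)"
    by (simp add: trace_sum matrix_sum_mult_left tensor_sum_right)
  finally show ?thesis by (simp add: S)
qed


theorem lemma15:
  fixes H :: "('s::finite \<times> 'c::finite) cmat"
    and J :: "'k::finite \<Rightarrow> 'c cmat"
    and rho0 :: "'c cmat" and rhoS0 :: "'s cmat"
    and v :: "'c \<Rightarrow> real" and vv :: "'c \<Rightarrow> complex^'c"
    and tau :: "nat \<Rightarrow> real"
    and T :: real and l :: nat
  assumes H_herm: "hermitian H" and H_min0: "smallest_eig_zero H"
    and spec_onb: "\<forall>i j. cinner (vv i) (vv j) = (if i = j then 1 else 0)"
    and spec_dec: "VC J = (\<Sum>j\<in>UNIV. csmult (complex_of_real (v j)) (ketbra (vv j) (vv j)))"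
    and v_nonneg: "\<forall>j. 0 \<le> v j"
    and rho0_dens: "density rho0"
    and renewal: "\<forall>\<sigma>. density \<sigma> \<longrightarrow>
          (\<exists>c::real. 0 \<le> c \<and> (\<Sum>j\<in>UNIV. J j ** \<sigma> ** cadj (J j)) = csmult (complex_of_real c) rho0)"
    and rhoS0_dens: "density rhoS0"
    and tau0: "tau 0 = 0" and tau_mono: "strict_mono tau"
    and T_nonneg: "0 \<le> T"
  shows "(1/2) * integral {0..T} (\<lambda>t. Pjump H J rhoS0 rho0 tau l t)
           = integral {0..T} (\<lambda>t. wnorm H J rhoS0 rho0 tau v vv 1 l t)
       \<and> integral {0..T} (\<lambda>t. wnorm H J rhoS0 rho0 tau v vv 1 l t)
           \<le> eps_quality H J rhoS0 rho0 tau v vv l T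
       \<and> eps_quality H J rhoS0 rho0 tau v vv l T
           \<le> (opnorm (VC J) * T) powr (3/4)
             * (integral {0..T} (\<lambda>t. wnorm H J rhoS0 rho0 tau v vv 1 l t)) powr (1/4)
       \<and> (opnorm (VC J) * T) powr (3/4)
             * (integral {0..T} (\<lambda>t. wnorm H J rhoS0 rho0 tau v vv 1 l t)) powr (1/4)
           = (opnorm (VC J) * T) powr (3/4) / 2 powr (1/4)
             * (integral {0..T} (\<lambda>t. Pjump H J rhoS0 rho0 tau l t)) powr (1/4)"
proof -
  have psdV: "psd (VC J)" by (rule psd_VC[OF spec_dec v_nonneg])
  define R where "R = rho_ren H J rhoS0 rho0 tau l"
  have R: "psd R" "trace R = 0 \<or> trace R = 1"
    using rho_ren_props[OF H_herm rhoS0_dens rho0_dens, of J tau l] by (auto simp: R_def)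
  have trR: "trf (mat 1) R \<le> 1" using R(2) by (auto simp: trf_def)
  define rho where "rho t = superop_exp t (Lnore H J) R" for t
  have rho_ev: "rho_ev H J rhoS0 rho0 tau l t = rho t" for t
    by (simp add: rho_ev_def rho_def R_def)
  have psd_rho: "psd (rho t)" for t unfolding rho_def by (rule psd_evol[OF H_herm R(1)])
  define P where "P j = tensor (mat 1 :: 's cmat) (ketbra (vv j) (vv j))" for j
  define p where "p j t = pj H J rhoS0 rho0 tau vv j l t" for j t
  have p_eq: "p j t = trf (P j) (rho t)" for j t
    by (simp add: p_def pj_def trf_def P_def rho_ev)
  have p_nn: "0 \<le> p j t" for j t
    unfolding p_eq trf_def P_def by (rule psd_trace_mult[OF psd_tensor[OF psd_mat1 psd_ketbra] psd_rho])
  have sumP: "(\<Sum>j\<in>UNIV. P j) = mat 1"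
    by (simp add: P_def tensor_sum_right[symmetric] onb_complete[OF spec_onb] tensor_mat1)
  have p_sum: "(\<Sum>j\<in>UNIV. p j t) = trf (mat 1) (rho t)" for t
  proof -
    have "(\<Sum>j\<in>UNIV. p j t) = Re (trace ((\<Sum>j\<in>UNIV. P j) ** rho t))"
      by (simp add: p_eq trf_def Re_sum matrix_sum_mult_left trace_sum)
    then show ?thesis by (simp add: sumP trf_def)
  qed
  have p_sum_le: "(\<Sum>j\<in>UNIV. p j t) \<le> 1" if "0 \<le> t" for t
    using trace_decr[OF H_herm psdV R(1) that] trR unfolding p_sum rho_def by linarith
  define w1 where "w1 t = (\<Sum>j\<in>UNIV. v j * p j t)" for t
  define w2s where "w2s t = (\<Sum>j\<in>UNIV. (v j)^2 * p j t)" for t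
  have w1_nn: "0 \<le> w1 t" for t unfolding w1_def using v_nonneg p_nn by (auto intro!: sum_nonneg)
  have w2s_nn: "0 \<le> w2s t" for t unfolding w2s_def using v_nonneg p_nn by (auto intro!: sum_nonneg)
  have wn1: "wnorm H J rhoS0 rho0 tau v vv 1 l t = w1 t" for t
    using w1_nn[of t] by (simp add: wnorm_def w1_def p_def powr_one)
  have wn2: "wnorm H J rhoS0 rho0 tau v vv 2 l t = sqrt (w2s t)" for t
  proof -
    have "wnorm H J rhoS0 rho0 tau v vv 2 l t = w2s t powr (1/2)"
      by (simp add: wnorm_def w2s_def p_def)
    then show ?thesis using w2s_nn[of t] by (simp add: powr_half_sqrt)
  qed
  have Pj: "Pjump H J rhoS0 rho0 tau l t = 2 * w1 t" for t
  proof -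
    have tens: "tensor (mat 1 :: 's cmat) (csmult 2 (VC J)) = csmult 2 (\<Sum>j\<in>UNIV. csmult (complex_of_real (v j)) (P j))"
      by (simp add: tensor_csmult_right spec_dec tensor_sum_right P_def)
    have "Pjump H J rhoS0 rho0 tau l t = Re (trace (tensor (mat 1 :: 's cmat) (csmult 2 (VC J)) ** rho t))"
      by (simp add: Pjump_def rho_ev trace_Dre)
    also have "\<dots> = Re (2 * (\<Sum>j\<in>UNIV. complex_of_real (v j) * trace (P j ** rho t)))"
      by (simp add: tens csmult_mult_left trace_csmult matrix_sum_mult_left trace_sum)
    also have "\<dots> = 2 * w1 t"
      by (simp add: w1_def p_eq trf_def Re_sum)
    finally show ?thesis .
  qed
  have p_cont: "continuous_on {0..T} (p j)" for j
  proof -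
    have "p j = (\<lambda>t. trf (P j) (superop_exp t (Lnore H J) R))"
      by (rule ext) (simp add: p_eq rho_def)
    then show ?thesis by (simp add: funct_cont[OF H_herm])
  qed
  have w1_cont: "continuous_on {0..T} w1"
    unfolding w1_def by (intro continuous_intros p_cont)
  have w2s_cont: "continuous_on {0..T} w2s"
    unfolding w2s_def by (intro continuous_intros p_cont)
  have int_w1: "w1 integrable_on {0..T}" by (rule integrable_continuous_interval[OF w1_cont])
  have int_w2: "(\<lambda>t. sqrt (w2s t)) integrable_on {0..T}"
    by (rule integrable_continuous_interval) (intro continuous_intros w2s_cont)
  define N where "N = opnorm (VC J)"
  have vN: "v j \<le> N" for j unfolding N_def by (rule v_le_opnorm[OF spec_onb spec_dec v_nonneg])
  have N0: "0 \<le> N" using vN[of undefined] v_nonneg by (metis order_trans)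
  have pt1: "w1 t \<le> sqrt (w2s t)" if "t \<in> {0..T}" for t
    unfolding w1_def w2s_def
    by (rule wmean_sq) (use p_nn v_nonneg p_sum_le that in auto)
  have pt2: "w2s t \<le> N * w1 t" for t
  proof -
    have "w2s t \<le> (\<Sum>j\<in>UNIV. N * (v j * p j t))"
      unfolding w2s_def
    proof (rule sum_mono)
      fix j
      have "v j * (v j * p j t) \<le> N * (v j * p j t)"
        using vN[of j] v_nonneg p_nn[of j t] by (intro mult_right_mono) auto
      then show "(v j)^2 * p j t \<le> N * (v j * p j t)" by (simp add: power2_eq_square mult.assoc)
    qed
    then show ?thesis by (simp add: w1_def sum_distrib_left)
  qed
  have pt3: "w1 t \<le> N" if "t \<in> {0..T}" for t
  proof -
    have "w1 t \<le> (\<Sum>j\<in>UNIV. N * p j t)"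
      unfolding w1_def using vN p_nn by (intro sum_mono mult_right_mono) auto
    also have "\<dots> = N * (\<Sum>j\<in>UNIV. p j t)" by (simp add: sum_distrib_left)
    also have "\<dots> \<le> N * 1" using p_sum_le[of t] that N0 by (intro mult_left_mono) auto
    finally show ?thesis by simp
  qed
  define I1 where "I1 = integral {0..T} w1"
  have I1_0: "0 \<le> I1" unfolding I1_def by (rule integral_nonneg[OF int_w1]) (simp add: w1_nn)
  have I1_N: "I1 \<le> N * T"
  proof -
    have "I1 \<le> integral {0..T} (\<lambda>t. N)"
      unfolding I1_def by (rule integral_le[OF int_w1]) (auto intro: pt3)
    also have "\<dots> = N * T" using T_nonneg by (simp add: content_real)
    finally show ?thesis .
  qed
  have intP: "integral {0..T} (\<lambda>t. Pjump H J rhoS0 rho0 tau l t) = 2 * I1"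
    by (simp add: Pj I1_def)
  have fW1: "(\<lambda>t. wnorm H J rhoS0 rho0 tau v vv 1 l t) = w1"
    by (rule ext) (rule wn1)
  have intW1: "integral {0..T} (\<lambda>t. wnorm H J rhoS0 rho0 tau v vv 1 l t) = I1"
    unfolding fW1 I1_def ..
  have eps: "eps_quality H J rhoS0 rho0 tau v vv l T = integral {0..T} (\<lambda>t. sqrt (w2s t))"
    by (simp add: eps_quality_def wn2)
  have c2: "I1 \<le> integral {0..T} (\<lambda>t. sqrt (w2s t))"
    unfolding I1_def by (rule integral_le[OF int_w1 int_w2 pt1])
  have c3: "integral {0..T} (\<lambda>t. sqrt (w2s t)) \<le> (N * T) powr (3/4) * I1 powr (1/4)"
  proof -
    have int3: "(\<lambda>t. sqrt (N * w1 t)) integrable_on {0..T}"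
      by (rule integrable_continuous_interval) (intro continuous_intros w1_cont)
    have "integral {0..T} (\<lambda>t. sqrt (w2s t)) \<le> integral {0..T} (\<lambda>t. sqrt (N * w1 t))"
      by (rule integral_le[OF int_w2 int3]) (simp add: pt2)
    also have "\<dots> \<le> sqrt (T * integral {0..T} (\<lambda>t. N * w1 t))"
      by (rule sqrt_integral) (use w1_cont N0 w1_nn T_nonneg in \<open>auto intro: continuous_intros\<close>)
    also have "integral {0..T} (\<lambda>t. N * w1 t) = N * I1" by (simp add: I1_def)
    also have "sqrt (T * (N * I1)) \<le> (N * T) powr (3/4) * I1 powr (1/4)"
      by (rule final_arith[OF I1_0 I1_N N0 T_nonneg])
    finally show ?thesis .
  qed
  have c4: "(N * T) powr (3/4) * I1 powr (1/4) = (N * T) powr (3/4) / 2 powr (1/4) * (2 * I1) powr (1/4)"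
    using I1_0 by (simp add: powr_mult)
  show ?thesis
    unfolding intP intW1 eps N_def[symmetric]
    using c2 c3 c4 by simp
qed

end
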